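(* Let $M$ be a Hausdorff space satisfying the first axiom of countability and the Lindelöf condition, and let $\mathcal{I}$ be a $\sigma$-ideal in the Borel $\sigma$-algebra $\mathcal{B}(M)$ containing all singletons $\{x\}$, $x\in M$. Then the quotient $\sigma$-algebra $\mathcal{B}(M)/\mathcal{I}$ has no points.
   Context: A $\sigma$-ideal $\mathcal{I}$ of a $\sigma$-algebra $\mathcal{B}$ is a nonempty subset closed under $A\mapsto A\wedge B$ ($B\in\mathcal{B}$) and under countable joins. The quotient $\mathcal{B}/\mathcal{I}$ is the set of classes of the equivalence $a\sim b\iff\exists p\in\mathcal{I}: a\vee p=b\vee p$, with the induced Boolean $\sigma$-algebra operations $[a]\vee[b]=[a\vee b]$, $[a]\wedge[b]=[a\wedge b]$, $[a]^\perp=[a^\perp]$, countable joins $\bigvee_n[a_n]=[\bigvee_n a_n]$. A point in a $\sigma$-complete lattice $\mathbb{L}$ is a nonempty subset $\mathfrak{p}$ with: (1) $0\notin\mathfrak{p}$; (2) $a,b\in\mathfrak{p}\Rightarrow a\wedge b\in\mathfrak{p}$; (3) $a\in\mathfrak{p}$, $a\le b\Rightarrow b\in\mathfrak{p}$; (4) for every countable family $(a_n)$ with $\bigvee_n a_n\in\mathfrak{p}$ there is $n$ with $a_n\in\mathfrak{p}$. *)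

theory Defs
  imports "HOL-Analysis.Analysis"
begin

definition Borel_sets :: "'a topology \<Rightarrow> 'a set set" where
  "Borel_sets X = sigma_sets (topspace X) {U. openin X U}"

definition sigma_ideal :: "'a set set \<Rightarrow> 'a set set \<Rightarrow> bool" where
  "sigma_ideal B I \<longleftrightarrow> I \<noteq> {} \<and> I \<subseteq> B \<and>
     (\<forall>A\<in>I. \<forall>C\<in>B. A \<inter> C \<in> I) \<and>
     (\<forall>F::nat \<Rightarrow> 'a set. range F \<subseteq> I \<longrightarrow> (\<Union>n. F n) \<in> I)"

definition qequiv :: "'a set set \<Rightarrow> 'a set \<Rightarrow> 'a set \<Rightarrow> bool" where
  "qequiv I a b \<longleftrightarrow> (\<exists>p\<in>I. a \<union> p = b \<union> p)"

definition qclass :: "'a set set \<Rightarrow> 'a set set \<Rightarrow> 'a set \<Rightarrow> 'a set set" where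
  "qclass B I a = {b\<in>B. qequiv I a b}"

definition quot :: "'a set set \<Rightarrow> 'a set set \<Rightarrow> 'a set set set" where
  "quot B I = qclass B I ` B"

definition qrep :: "'a set set \<Rightarrow> 'a set set \<Rightarrow> 'a set set \<Rightarrow> 'a set" where
  "qrep B I x = (SOME a. a \<in> B \<and> x = qclass B I a)"

definition qinf :: "'a set set \<Rightarrow> 'a set set \<Rightarrow> 'a set set \<Rightarrow> 'a set set \<Rightarrow> 'a set set" where
  "qinf B I x y = qclass B I (qrep B I x \<inter> qrep B I y)"

definition qzero :: "'a set set \<Rightarrow> 'a set set \<Rightarrow> 'a set set" where
  "qzero B I = qclass B I {}"

definition qSup :: "'a set set \<Rightarrow> 'a set set \<Rightarrow> (nat \<Rightarrow> 'a set set) \<Rightarrow> 'a set set" where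
  "qSup B I F = qclass B I (\<Union>n. qrep B I (F n))"

definition qle :: "'a set set \<Rightarrow> 'a set set \<Rightarrow> 'a set set \<Rightarrow> 'a set set \<Rightarrow> bool" where
  "qle B I x y \<longleftrightarrow> qinf B I x y = x"

definition is_point :: "'a set set \<Rightarrow> 'a set set \<Rightarrow> 'a set set set \<Rightarrow> bool" where
  "is_point B I P \<longleftrightarrow> P \<noteq> {} \<and> P \<subseteq> quot B I \<and>
     qzero B I \<notin> P \<and>
     (\<forall>x\<in>P. \<forall>y\<in>P. qinf B I x y \<in> P) \<and>
     (\<forall>x\<in>P. \<forall>y\<in>quot B I. qle B I x y \<longrightarrow> y \<in> P) \<and>
     (\<forall>F. range F \<subseteq> quot B I \<longrightarrow> qSup B I F \<in> P \<longrightarrow> (\<exists>n. F n \<in> P))"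

end

theory Submission
  imports Defs
begin

lemma si_Un:
  assumes "sigma_ideal B I" "p \<in> I" "q \<in> I" shows "p \<union> q \<in> I"
proof -
  let ?F = "\<lambda>n::nat. if n = 0 then p else q"
  have "range ?F \<subseteq> I" using assms by auto
  hence "(\<Union>n. ?F n) \<in> I" using assms(1) unfolding sigma_ideal_def by blast
  moreover have "(\<Union>n. ?F n) = p \<union> q"
    by (auto split: if_splits)
  ultimately show ?thesis by simp
qed

lemma qequiv_refl: "sigma_ideal B I \<Longrightarrow> qequiv I a a"
  unfolding qequiv_def sigma_ideal_def by auto

lemma qequiv_sym: "qequiv I a b \<Longrightarrow> qequiv I b a"
  unfolding qequiv_def by metis

lemma qequiv_trans:
  assumes "sigma_ideal B I" "qequiv I a b" "qequiv I b c" shows "qequiv I a c"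
proof -
  obtain p q where pq: "p \<in> I" "q \<in> I" "a \<union> p = b \<union> p" "b \<union> q = c \<union> q"
    using assms unfolding qequiv_def by blast
  have "a \<union> (p \<union> q) = c \<union> (p \<union> q)" using pq(3,4) by blast
  thus ?thesis using si_Un[OF assms(1) pq(1,2)] unfolding qequiv_def by blast
qed

lemma qclass_eq:
  assumes "sigma_ideal B I" "qequiv I a b" shows "qclass B I a = qclass B I b"
  unfolding qclass_def using assms qequiv_trans qequiv_sym by blast

lemma qclass_mem: "sigma_ideal B I \<Longrightarrow> a \<in> B \<Longrightarrow> a \<in> qclass B I a"
  unfolding qclass_def using qequiv_refl by blast

lemma qrep:
  assumes "x \<in> quot B I" shows "qrep B I x \<in> B \<and> qclass B I (qrep B I x) = x"
proof -
  obtain a where "a \<in> B" "x = qclass B I a" using assms unfolding quot_def by blast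
  hence "\<exists>a. a \<in> B \<and> x = qclass B I a" by blast
  from someI_ex[OF this] show ?thesis unfolding qrep_def by auto
qed

lemma qrep_equiv:
  assumes "sigma_ideal B I" "a \<in> B" shows "qequiv I a (qrep B I (qclass B I a))"
proof -
  have x: "qclass B I a \<in> quot B I" using assms unfolding quot_def by blast
  from qrep[OF x] have "qrep B I (qclass B I a) \<in> qclass B I a"
    using qclass_mem[OF assms(1)] by metis
  thus ?thesis unfolding qclass_def by blast
qed

lemma qinf_class:
  assumes "sigma_ideal B I" "a \<in> B" "b \<in> B"
  shows "qinf B I (qclass B I a) (qclass B I b) = qclass B I (a \<inter> b)"
proof -
  obtain p where p: "p \<in> I" "a \<union> p = qrep B I (qclass B I a) \<union> p"
    using qrep_equiv[OF assms(1,2)] unfolding qequiv_def by blast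
  obtain q where q: "q \<in> I" "b \<union> q = qrep B I (qclass B I b) \<union> q"
    using qrep_equiv[OF assms(1,3)] unfolding qequiv_def by blast
  have "(a \<inter> b) \<union> (p \<union> q) = (qrep B I (qclass B I a) \<inter> qrep B I (qclass B I b)) \<union> (p \<union> q)"
    using p(2) q(2) by blast
  hence "qequiv I (qrep B I (qclass B I a) \<inter> qrep B I (qclass B I b)) (a \<inter> b)"
    using si_Un[OF assms(1) p(1) q(1)] unfolding qequiv_def by metis
  thus ?thesis unfolding qinf_def using qclass_eq[OF assms(1)] by blast
qed

lemma qSup_class:
  assumes "sigma_ideal B I" "range f \<subseteq> B"
  shows "qSup B I (\<lambda>n. qclass B I (f n)) = qclass B I (\<Union>n. f n)"
proof -
  have "\<forall>n. \<exists>p. p \<in> I \<and> f n \<union> p = qrep B I (qclass B I (f n)) \<union> p"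
    using qrep_equiv[OF assms(1)] assms(2) unfolding qequiv_def by blast
  then obtain p where p: "\<And>n. p n \<in> I" "\<And>n. f n \<union> p n = qrep B I (qclass B I (f n)) \<union> p n"
    by metis
  have r: "(\<Union>n. p n) \<in> I" using assms(1) p(1) unfolding sigma_ideal_def by blast
  have "(\<Union>n. qrep B I (qclass B I (f n))) \<union> (\<Union>n. p n) = (\<Union>n. f n) \<union> (\<Union>n. p n)"
  proof -
    have "(\<Union>n. qrep B I (qclass B I (f n))) \<union> (\<Union>n. p n) = (\<Union>n. qrep B I (qclass B I (f n)) \<union> p n) \<union> (\<Union>n. p n)" by blast
    also have "\<dots> = (\<Union>n. f n \<union> p n) \<union> (\<Union>n. p n)" using p(2) by simp
    also have "\<dots> = (\<Union>n. f n) \<union> (\<Union>n. p n)" by blast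
    finally show ?thesis .
  qed
  hence "qequiv I (\<Union>n. qrep B I (qclass B I (f n))) (\<Union>n. f n)"
    using r unfolding qequiv_def by blast
  thus ?thesis unfolding qSup_def using qclass_eq[OF assms(1)] by blast
qed

lemma point_Sup:
  fixes f :: "nat \<Rightarrow> 'a set"
  assumes "sigma_ideal B I" "is_point B I P" "range f \<subseteq> B" "qclass B I (\<Union>n. f n) \<in> P"
  shows "\<exists>n. qclass B I (f n) \<in> P"
proof -
  have "range (\<lambda>n. qclass B I (f n)) \<subseteq> quot B I" using assms(3) unfolding quot_def by blast
  moreover have "qSup B I (\<lambda>n. qclass B I (f n)) \<in> P" using qSup_class[OF assms(1,3)] assms(4) by simp
  ultimately show ?thesis using assms(2) unfolding is_point_def by blast
qed

lemma point_disj: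
  assumes "sigma_ideal B I" "is_point B I P" "a \<in> B" "b \<in> B" "a \<inter> b = {}"
    "qclass B I a \<in> P" "qclass B I b \<in> P"
  shows False
proof -
  have "qinf B I (qclass B I a) (qclass B I b) \<in> P" using assms(2,6,7) unfolding is_point_def by blast
  hence "qclass B I {} \<in> P" using qinf_class[OF assms(1,3,4)] assms(5) by simp
  thus False using assms(2) unfolding is_point_def qzero_def by blast
qed

lemma point_top:
  assumes "sigma_ideal B I" "is_point B I P" "B \<subseteq> Pow T" "T \<in> B"
  shows "qclass B I T \<in> P"
proof -
  obtain x where x: "x \<in> P" using assms(2) unfolding is_point_def by blast
  then obtain a where a: "a \<in> B" "x = qclass B I a" using assms(2) unfolding is_point_def quot_def by blast
  have "qinf B I x (qclass B I T) = x" using qinf_class[OF assms(1) a(1) assms(4)] a assms(3) by (simp add: Int_absorb2 subset_iff)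
  moreover have "qclass B I T \<in> quot B I" using assms(4) unfolding quot_def by blast
  ultimately show ?thesis using x assms(2) unfolding is_point_def qle_def by blast
qed

lemma point_nz: "is_point B I P \<Longrightarrow> qclass B I {} \<notin> P"
  unfolding is_point_def qzero_def by simp

lemma stepl:
  assumes H: "Hausdorff_space X" and FC: "first_countable X"
    and T_def: "T = topspace X" and x: "x \<in> T"
  shows "\<exists>\<BB>. countable \<BB> \<and> \<BB> \<noteq> {} \<and> (\<forall>V\<in>\<BB>. openin X V \<and> x \<in> V) \<and> (\<Union>V\<in>\<BB>. T - X closure_of V) \<union> {x} = T"
proof -
  have xT: "x \<in> topspace X" using x T_def by simp
  have "\<exists>\<BB>. countable \<BB> \<and> (\<forall>V\<in>\<BB>. openin X V) \<and>
    (\<forall>U. openin X U \<and> x \<in> U \<longrightarrow> (\<exists>V\<in>\<BB>. x \<in> V \<and> V \<subseteq> U))"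
    using FC xT unfolding first_countable_def by blast
  then obtain \<BB> where bb: "countable \<BB>" "\<forall>V\<in>\<BB>. openin X V"
    "\<forall>U. openin X U \<and> x \<in> U \<longrightarrow> (\<exists>V\<in>\<BB>. x \<in> V \<and> V \<subseteq> U)"
    by blast
  define C where "C = {V\<in>\<BB>. x \<in> V}"
  have Cne: "C \<noteq> {}" using bb(3) x openin_topspace[of X] unfolding C_def T_def by blast
  have Cc: "countable C" using bb(1) unfolding C_def by simp
  have "(\<Union>V\<in>C. T - X closure_of V) \<union> {x} = T"
  proof (rule equalityI)
    show "(\<Union>V\<in>C. T - X closure_of V) \<union> {x} \<subseteq> T" using x by auto
    show "T \<subseteq> (\<Union>V\<in>C. T - X closure_of V) \<union> {x}"
    proof (rule subsetI)
      fix y assume y: "y \<in> T"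
      show "y \<in> (\<Union>V\<in>C. T - X closure_of V) \<union> {x}"
      proof (cases "y = x")
        case False
        have xT: "x \<in> topspace X" and yT: "y \<in> topspace X" using x y T_def by auto
        have "\<exists>U W. openin X U \<and> openin X W \<and> x \<in> U \<and> y \<in> W \<and> disjnt U W"
          using H xT yT False unfolding Hausdorff_space_def by metis
        then obtain U W where UW: "openin X U" "openin X W" "x \<in> U" "y \<in> W" "disjnt U W"
          by blast
        have "\<exists>V. V \<in> \<BB> \<and> x \<in> V \<and> V \<subseteq> U" using bb(3) UW(1,3) by blast
        then obtain V where V: "V \<in> \<BB>" "x \<in> V" "V \<subseteq> U" by blast
        have VC: "V \<in> C" using V by (simp add: C_def)
        have "W \<inter> V = {}" using UW(5) V(3) unfolding disjnt_def by blast
        hence "W \<inter> X closure_of V = {}" using openin_Int_closure_of_eq_empty[OF UW(2), of V] by simp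
        hence "y \<in> T - X closure_of V" using y UW(4) by blast
        thus ?thesis using VC by blast
      qed simp
    qed
  qed
  moreover have "\<forall>V\<in>C. openin X V \<and> x \<in> V" using bb(2) C_def by simp
  ultimately show ?thesis using Cne Cc by blast
qed

theorem proposition3p30:
  fixes X :: "'a topology" and I :: "'a set set"
  assumes "Hausdorff_space X" and "first_countable X" and "Lindelof_space X"
    and "sigma_ideal (Borel_sets X) I"
    and "\<And>x. x \<in> topspace X \<Longrightarrow> {x} \<in> I"
  shows "\<not> (\<exists>P. is_point (Borel_sets X) I P)"
proof
  assume "\<exists>P. is_point (Borel_sets X) I P"
  then obtain P where P: "is_point (Borel_sets X) I P" by blast
  define T where "T = topspace X"
  define B where "B = Borel_sets X"
  have si: "sigma_ideal B I" using assms(4) B_def by simp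
  have PB: "is_point B I P" using P B_def by simp
  have sa: "sigma_algebra T B" unfolding B_def Borel_sets_def T_def
    by (rule sigma_algebra_sigma_sets) (auto dest: openin_subset)
  have BP: "B \<subseteq> Pow T" using sa unfolding sigma_algebra_iff2 by blast
  have TB: "T \<in> B" proof -
    have "{} \<in> B" "\<forall>s\<in>B. T - s \<in> B" using sa unfolding sigma_algebra_iff2 by blast+
    hence "T - {} \<in> B" by blast
    thus ?thesis by simp
  qed
  have openB: "openin X U \<Longrightarrow> U \<in> B" for U
    unfolding B_def Borel_sets_def by (rule sigma_sets.Basic) simp
  have closB: "T - X closure_of U \<in> B" for U
  proof -
    have "openin X (topspace X - X closure_of U)" by (simp add: openin_diff)
    hence "topspace X - X closure_of U \<in> B" by (rule openB)
    thus ?thesis unfolding T_def .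
  qed
  have top: "qclass B I T \<in> P" using point_top[OF si PB BP TB] .
  have step: "\<exists>V. openin X V \<and> x \<in> V \<and> qclass B I (T - X closure_of V) \<in> P" if x: "x \<in> T" for x
  proof -
    obtain C where C: "countable C" "C \<noteq> {}" "\<forall>V\<in>C. openin X V \<and> x \<in> V"
      "(\<Union>V\<in>C. T - X closure_of V) \<union> {x} = T"
      using stepl[OF assms(1) assms(2) T_def x] by blast
    define f where "f n = T - X closure_of (from_nat_into C n)" for n
    have fB: "range f \<subseteq> B" using closB unfolding f_def by blast
    have rng: "range (from_nat_into C) = C" using range_from_nat_into[OF C(2) C(1)] .
    have "(\<Union>n. f n) = (\<Union>V\<in>range (from_nat_into C). T - X closure_of V)" unfolding f_def by blast
    hence U: "(\<Union>n. f n) = (\<Union>V\<in>C. T - X closure_of V)" using rng by simp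
    have xI: "{x} \<in> I" using assms(5) x T_def by simp
    have "T \<union> {x} = (\<Union>n. f n) \<union> {x}" using C(4) x U by blast
    hence "qequiv I T (\<Union>n. f n)" unfolding qequiv_def using xI by blast
    hence "qclass B I T = qclass B I (\<Union>n. f n)" by (rule qclass_eq[OF si])
    hence "qclass B I (\<Union>n. f n) \<in> P" using top by simp
    then obtain n where n: "qclass B I (f n) \<in> P" using point_Sup[OF si PB fB] by blast
    have "from_nat_into C n \<in> C" using from_nat_into[OF C(2)] .
    hence "openin X (from_nat_into C n)" "x \<in> from_nat_into C n" using C(3) by auto
    moreover have "qclass B I (T - X closure_of (from_nat_into C n)) \<in> P" using n unfolding f_def .
    ultimately show ?thesis by blast
  qed
  hence "\<forall>x\<in>T. \<exists>V. openin X V \<and> x \<in> V \<and> qclass B I (T - X closure_of V) \<in> P" by blast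
  from bchoice[OF this] obtain V where V: "\<And>x. x \<in> T \<Longrightarrow> openin X (V x) \<and> x \<in> V x \<and> qclass B I (T - X closure_of (V x)) \<in> P"
    by blast
  have Vo: "openin X (V x)" if "x \<in> T" for x using V[OF that] by simp
  have Vx: "x \<in> V x" if "x \<in> T" for x using V[OF that] by simp
  have opV: "\<And>U. U \<in> V ` T \<Longrightarrow> openin X U" using Vo by auto
  have sub: "V x \<subseteq> topspace X" if "x \<in> T" for x using openin_subset[OF Vo[OF that]] .
  have cov: "\<Union>(V ` T) = topspace X"
  proof (rule equalityI)
    show "\<Union>(V ` T) \<subseteq> topspace X" using sub by auto
    show "topspace X \<subseteq> \<Union>(V ` T)" using Vx unfolding T_def by auto
  qed
  have "\<exists>\<VV>. countable \<VV> \<and> \<VV> \<subseteq> V ` T \<and> \<Union>\<VV> = topspace X"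
    by (rule Lindelof_spaceD[OF assms(3) opV cov])
  then obtain \<VV> where VV0: "countable \<VV> \<and> \<VV> \<subseteq> V ` T \<and> \<Union>\<VV> = topspace X"
    by (rule exE)
  hence VV: "countable \<VV>" "\<VV> \<subseteq> V ` T" "\<Union>\<VV> = T" unfolding T_def by auto
  show False
  proof (cases "\<VV> = {}")
    case True
    hence "T = {}" using VV by auto
    hence "qclass B I {} \<in> P" using top by simp
    thus False using point_nz[OF PB] by blast
  next
    case False
    define g where "g = from_nat_into \<VV>"
    have rg: "range g = \<VV>" unfolding g_def using range_from_nat_into[OF False VV(1)] .
    have gU: "(\<Union>n. g n) = T" using rg VV(3) by simp
    have gV: "g n \<in> V ` T" for n using rg VV(2) by blast
    have gB: "range g \<subseteq> B"
    proof (rule subsetI)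
      fix U assume "U \<in> range g"
      then obtain m where m: "U = g m" by (rule rangeE)
      obtain y where y: "y \<in> T" "g m = V y" using gV[of m] by (rule imageE)
      show "U \<in> B" unfolding m y(2) by (rule openB[OF Vo[OF y(1)]])
    qed
    have "qclass B I (\<Union>n. g n) \<in> P" using gU top by simp
    then obtain n where n: "qclass B I (g n) \<in> P" using point_Sup[OF si PB gB] by blast
    obtain x where x: "x \<in> T" "g n = V x" using gV[of n] by (rule imageE)
    have "V x \<subseteq> X closure_of (V x)" using closure_of_subset[OF openin_subset[OF Vo[OF x(1)]]] .
    hence dj: "V x \<inter> (T - X closure_of (V x)) = {}" by blast
    have VB: "V x \<in> B" using openB[OF Vo[OF x(1)]] .
    have VP: "qclass B I (V x) \<in> P" using n x(2) by simp
    have CP: "qclass B I (T - X closure_of (V x)) \<in> P" using V[OF x(1)] by simp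
    show False using point_disj[OF si PB VB closB dj VP CP] .
  qed
qed
end
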